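(* For every $\varepsilon>0$ there exist constants $b>1$, $c\in(0,2\sqrt b)$, $C>0$ with $C<(\pi+\varepsilon)\,c\sqrt b$, and a function $a\in L^\infty(\mathbb{R}^+)$ with $0\le a(t)\le C$ for almost every $t\ge 0$, such that the equation $$u''(t)+c\,u'(t)+\big(b+a(t)\big)u(t)=0\quad\text{for a.e. } t\ge 0$$ has a solution $u\in W^{2,\infty}_{\mathrm{loc}}(\mathbb{R}^+)$ which is unbounded on $\mathbb{R}^+=[0,\infty)$. *)

theory Defs
  imports "HOL-Analysis.Analysis"
begin

text \<open>u belongs to W^{2,infinity}_loc([0,infinity)) with first derivative u1 and
  (a.e.) second derivative u2: u is differentiable on [0,infinity) with derivative u1,
  u1 is Lipschitz on every bounded interval [0,T], and u2 is the a.e. derivative of u1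
  (which equals the weak derivative of u1, automatically in L^infinity_loc).\<close>
definition W2inf_loc :: "(real \<Rightarrow> real) \<Rightarrow> (real \<Rightarrow> real) \<Rightarrow> (real \<Rightarrow> real) \<Rightarrow> bool" where
  "W2inf_loc u u1 u2 \<longleftrightarrow>
     (\<forall>t\<ge>0. (u has_real_derivative u1 t) (at t within {0..})) \<and>
     (\<forall>T\<ge>0. \<exists>L. \<forall>s\<in>{0..T}. \<forall>t\<in>{0..T}. \<bar>u1 s - u1 t\<bar> \<le> L * \<bar>s - t\<bar>) \<and>
     (AE t in lebesgue_on {0..}. (u1 has_real_derivative u2 t) (at t within {0..}))"

end

theory Submission
  imports Defs
begin



definition ph :: "real \<Rightarrow> real \<Rightarrow> real" where "ph \<tau> t = t - \<tau> * of_int \<lfloor>t/\<tau>\<rfloor>"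
definition ext :: "real \<Rightarrow> real \<Rightarrow> (real\<Rightarrow>real) \<Rightarrow> real \<Rightarrow> real" where
  "ext \<tau> m f t = m powi \<lfloor>t/\<tau>\<rfloor> * f (ph \<tau> t)"

lemma ph_range: assumes "\<tau> > 0" shows "0 \<le> ph \<tau> t" "ph \<tau> t < \<tau>"
proof -
  have "of_int \<lfloor>t/\<tau>\<rfloor> \<le> t/\<tau>" "t/\<tau> < of_int \<lfloor>t/\<tau>\<rfloor> + 1" by linarith+
  then have "\<tau> * of_int \<lfloor>t/\<tau>\<rfloor> \<le> \<tau> * (t/\<tau>)" "\<tau> * (t/\<tau>) < \<tau> * (of_int \<lfloor>t/\<tau>\<rfloor> + 1)" using assms
    by (intro mult_left_mono mult_strict_left_mono; simp)+
  then have "\<tau> * of_int \<lfloor>t/\<tau>\<rfloor> \<le> t" "t < \<tau> * of_int \<lfloor>t/\<tau>\<rfloor> + \<tau>" using assms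
    by (simp_all add: field_simps)
  then show "0 \<le> ph \<tau> t" "ph \<tau> t < \<tau>" unfolding ph_def by linarith+
qed

lemma floor_shift: assumes "\<tau> > 0" shows "\<lfloor>(t + of_int k * \<tau>)/\<tau>\<rfloor> = \<lfloor>t/\<tau>\<rfloor> + k"
proof -
  have "(t + of_int k * \<tau>)/\<tau> = t/\<tau> + of_int k" using assms by (simp add: field_simps)
  then show ?thesis by simp
qed

lemma ph_shift: assumes "\<tau> > 0" shows "ph \<tau> (t + of_int k * \<tau>) = ph \<tau> t"
  using floor_shift[OF assms] unfolding ph_def by (simp add: algebra_simps)

lemma ext_shift: assumes "\<tau> > 0" "m \<noteq> 0"
  shows "ext \<tau> m f (t + of_int k * \<tau>) = m powi k * ext \<tau> m f t"
  unfolding ext_def ph_shift[OF assms(1)] floor_shift[OF assms(1)]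
  using assms(2) by (simp add: power_int_add)

lemma ext_eq: assumes "\<tau> > 0" "m \<noteq> 0"
  shows "ext \<tau> m f x = m powi k * ext \<tau> m f (x - of_int k * \<tau>)"
  using ext_shift[OF assms, of f "x - of_int k * \<tau>" k] by simp

lemma ext_base: assumes "0 \<le> s" "s < \<tau>" shows "ext \<tau> m f s = f s"
proof -
  have "\<lfloor>s/\<tau>\<rfloor> = 0" using assms by (simp add: floor_eq_iff)
  then show ?thesis unfolding ext_def ph_def by simp
qed

lemma ext_neg: assumes "-\<tau> \<le> s" "s < 0" "m \<noteq> 0"
  shows "ext \<tau> m f s = inverse m * f (s + \<tau>)"
proof -
  have t: "\<tau> > 0" using assms by linarith
  have "\<lfloor>s/\<tau>\<rfloor> = -1" using assms t by (simp add: floor_eq_iff field_simps)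
  then show ?thesis unfolding ext_def ph_def by (simp add: power_int_minus)
qed

lemma decomp: assumes "\<tau> > 0" shows "t = ph \<tau> t + of_int \<lfloor>t/\<tau>\<rfloor> * \<tau>"
  unfolding ph_def by simp

lemma ext_deriv_transfer:
  assumes "\<tau> > 0" "m \<noteq> 0" "(ext \<tau> m f has_real_derivative D) (at (ph \<tau> t))"
  shows "(ext \<tau> m f has_real_derivative m powi \<lfloor>t/\<tau>\<rfloor> * D) (at t)"
proof -
  let ?k = "\<lfloor>t/\<tau>\<rfloor>"
  have "((\<lambda>x. ext \<tau> m f (x + - (of_int ?k * \<tau>))) has_real_derivative D) (at t)"
    using assms(3) DERIV_shift[of "ext \<tau> m f" D t "- (of_int ?k * \<tau>)"] unfolding ph_def
    by (simp add: algebra_simps)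
  then have "((\<lambda>x. m powi ?k * ext \<tau> m f (x - of_int ?k * \<tau>)) has_real_derivative m powi ?k * D) (at t)"
    by (intro DERIV_cmult) simp
  moreover have "(\<lambda>x. m powi ?k * ext \<tau> m f (x - of_int ?k * \<tau>)) = ext \<tau> m f"
    using ext_eq[OF assms(1,2)] by (auto intro!: ext)
  ultimately show ?thesis by simp
qed

lemma ext_cont_transfer:
  assumes "\<tau> > 0" "m \<noteq> 0" "isCont (ext \<tau> m f) (ph \<tau> t)"
  shows "isCont (ext \<tau> m f) t"
proof -
  let ?k = "\<lfloor>t/\<tau>\<rfloor>"
  have "isCont (\<lambda>x. x - of_int ?k * \<tau>) t" by simp
  moreover have "isCont (ext \<tau> m f) (t - of_int ?k * \<tau>)" using assms(3) decomp[OF assms(1), of t]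
    by (metis add_diff_cancel_right')
  ultimately have "isCont (\<lambda>x. m powi ?k * ext \<tau> m f (x - of_int ?k * \<tau>)) t"
    by (intro continuous_intros) (auto intro: isCont_o2)
  moreover have "(\<lambda>x. m powi ?k * ext \<tau> m f (x - of_int ?k * \<tau>)) = ext \<tau> m f"
    using ext_eq[OF assms(1,2)] by (auto intro!: ext)
  ultimately show ?thesis by simp
qed

lemma deriv_glue:
  fixes f gl gr :: "real \<Rightarrow> real"
  assumes "(gl has_real_derivative D) (at x)" "(gr has_real_derivative D) (at x)" "e > 0"
    "\<And>y. x - e < y \<Longrightarrow> y \<le> x \<Longrightarrow> f y = gl y" "\<And>y. x \<le> y \<Longrightarrow> y < x + e \<Longrightarrow> f y = gr y"
  shows "(f has_real_derivative D) (at x)"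
  unfolding has_field_derivative_iff
proof (rule filterlim_split_at_real)
  have fx1: "f x = gl x" using assms(4)[of x] assms(3) by simp
  have fx2: "f x = gr x" using assms(5)[of x] assms(3) by simp
  have "((\<lambda>y. (gl y - gl x) / (y - x)) \<longlongrightarrow> D) (at_left x)"
    using assms(1) unfolding has_field_derivative_iff by (rule filterlim_mono) (simp_all add: at_le)
  moreover have ev: "eventually (\<lambda>y. y \<in> {x - e<..<x}) (at_left x)"
    using assms(3) by (intro eventually_at_left_real) simp
  have "eventually (\<lambda>y. (gl y - gl x) / (y - x) = (f y - f x) / (y - x)) (at_left x)"
  proof (rule eventually_mono[OF ev])
    fix y assume "y \<in> {x - e<..<x}"
    then have "f y = gl y" using assms(4)[of y] by simp
    then show "(gl y - gl x) / (y - x) = (f y - f x) / (y - x)" using fx1 by simp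
  qed
  ultimately show "((\<lambda>y. (f y - f x) / (y - x)) \<longlongrightarrow> D) (at_left x)"
    by (rule Lim_transform_eventually)
  have "((\<lambda>y. (gr y - gr x) / (y - x)) \<longlongrightarrow> D) (at_right x)"
    using assms(2) unfolding has_field_derivative_iff by (rule filterlim_mono) (simp_all add: at_le)
  moreover have ev: "eventually (\<lambda>y. y \<in> {x<..<x + e}) (at_right x)"
    using assms(3) by (intro eventually_at_right_real) simp
  have "eventually (\<lambda>y. (gr y - gr x) / (y - x) = (f y - f x) / (y - x)) (at_right x)"
  proof (rule eventually_mono[OF ev])
    fix y assume "y \<in> {x<..<x + e}"
    then have "f y = gr y" using assms(5)[of y] by simp
    then show "(gr y - gr x) / (y - x) = (f y - f x) / (y - x)" using fx2 by simp
  qed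
  ultimately show "((\<lambda>y. (f y - f x) / (y - x)) \<longlongrightarrow> D) (at_right x)"
    by (rule Lim_transform_eventually)
qed

lemma cont_glue:
  fixes f gl gr :: "real \<Rightarrow> real"
  assumes "isCont gl x" "isCont gr x" "gl x = gr x" "e > 0"
    "\<And>y. x - e < y \<Longrightarrow> y \<le> x \<Longrightarrow> f y = gl y" "\<And>y. x \<le> y \<Longrightarrow> y < x + e \<Longrightarrow> f y = gr y"
  shows "isCont f x"
  unfolding isCont_def
proof (rule filterlim_split_at_real)
  have fx1: "f x = gl x" using assms(5)[of x] assms(4) by simp
  have fx2: "f x = gr x" using fx1 assms(3) by simp
  have "(gl \<longlongrightarrow> gl x) (at_left x)"
    using assms(1) unfolding isCont_def by (rule filterlim_mono) (simp_all add: at_le)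
  moreover have ev: "eventually (\<lambda>y. y \<in> {x - e<..<x}) (at_left x)"
    using assms(4) by (intro eventually_at_left_real) simp
  have "eventually (\<lambda>y. gl y = f y) (at_left x)"
  proof (rule eventually_mono[OF ev])
    fix y assume "y \<in> {x - e<..<x}"
    then show "gl y = f y" using assms(5)[of y] by simp
  qed
  ultimately show "(f \<longlongrightarrow> f x) (at_left x)" unfolding fx1 by (rule Lim_transform_eventually)
  have "(gr \<longlongrightarrow> gr x) (at_right x)"
    using assms(2) unfolding isCont_def by (rule filterlim_mono) (simp_all add: at_le)
  moreover have ev: "eventually (\<lambda>y. y \<in> {x<..<x + e}) (at_right x)"
    using assms(4) by (intro eventually_at_right_real) simp
  have "eventually (\<lambda>y. gr y = f y) (at_right x)"
  proof (rule eventually_mono[OF ev])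
    fix y assume "y \<in> {x<..<x + e}"
    then show "gr y = f y" using assms(6)[of y] by simp
  qed
  ultimately show "(f \<longlongrightarrow> f x) (at_right x)" unfolding fx2 by (rule Lim_transform_eventually)
qed

locale sw =
  fixes c C \<omega> \<tau>1 \<tau> :: real
  assumes cpos: "c > 0" and Cpos: "C > 0" and om: "\<omega> = sqrt (1 + C)"
    and t1: "\<tau>1 = pi / (2 * \<omega>)" and tt: "\<tau> = \<tau>1 + pi/2"
begin

definition "p s = (if s \<le> \<tau>1 then cos (\<omega> * s) else - \<omega> * sin (s - \<tau>1))"
definition "p1 s = (if s \<le> \<tau>1 then - \<omega> * sin (\<omega> * s) else - \<omega> * cos (s - \<tau>1))"
definition "q s = (if s < \<tau>1 then C else 0)"
definition "w = ext \<tau> (-\<omega>) p"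
definition "w1 = ext \<tau> (-\<omega>) p1"
definition "a t = q (ph \<tau> t)"

lemma om1: "\<omega> > 1" and om2: "\<omega>^2 = 1 + C" using Cpos unfolding om by auto
lemma t1pos: "\<tau>1 > 0" using om1 t1 by auto
lemma omt1: "\<omega> * \<tau>1 = pi/2" using om1 t1 by auto
lemma t1lt: "\<tau>1 < pi/2"
proof -
  have "\<tau>1 * 1 < \<tau>1 * \<omega>" using t1pos om1 by (intro mult_strict_left_mono) auto
  then show ?thesis using omt1 by (simp add: mult.commute)
qed
lemma tpos: "\<tau> > 0" using t1pos tt pi_gt_zero by linarith
lemma omnz: "-\<omega> \<noteq> 0" using om1 by auto

lemma t1_lt_t: "\<tau>1 < \<tau>" using tt pi_gt_zero by linarith
lemma w_base: "0 \<le> s \<Longrightarrow> s < \<tau> \<Longrightarrow> w s = p s" unfolding w_def by (rule ext_base)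
lemma w1_base: "0 \<le> s \<Longrightarrow> s < \<tau> \<Longrightarrow> w1 s = p1 s" unfolding w1_def by (rule ext_base)

lemma w_loc: assumes "0 \<le> s" "s < \<tau>" shows "(w has_real_derivative p1 s) (at s)"
proof -
  consider "s = 0" | "0 < s" "s < \<tau>1" | "s = \<tau>1" | "\<tau>1 < s" "s < \<tau>" using assms by linarith
  then show ?thesis
  proof cases
    case 1
    define e where "e = min \<tau>1 (pi/2)"
    have e: "e > 0" "e \<le> \<tau>1" "e \<le> pi/2" using t1pos unfolding e_def by auto
    show ?thesis unfolding 1
    proof (rule deriv_glue[where gl=cos and gr="\<lambda>x. cos (\<omega> * x)" and e=e])
      show "(cos has_real_derivative p1 0) (at 0)" unfolding p1_def using t1pos
        by (auto intro!: derivative_eq_intros)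
      show "((\<lambda>x. cos (\<omega> * x)) has_real_derivative p1 0) (at 0)" unfolding p1_def using t1pos
        by (auto intro!: derivative_eq_intros)
      show "e > 0" by fact
      fix y assume y: "0 - e < y" "y \<le> 0"
      show "w y = cos y"
      proof (cases "y = 0")
        case True then show ?thesis unfolding w_def using ext_base[of 0 \<tau> "-\<omega>" p] tpos t1pos
          by (simp add: p_def)
      next
        case False
        then have "w y = inverse (-\<omega>) * p (y + \<tau>)" unfolding w_def using y e tt t1pos
          by (intro ext_neg omnz) auto
        also have "p (y + \<tau>) = -\<omega> * sin (y + pi/2)" unfolding p_def using y e tt by auto
        finally show ?thesis using om1 by (simp add: sin_add)
      qed
    next
      fix y assume y: "0 \<le> y" "y < 0 + e"
      then show "w y = cos (\<omega> * y)" unfolding w_def using e tt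
        by (subst ext_base) (auto simp: p_def)
    qed
  next
    case 2
    have "((\<lambda>x. cos (\<omega> * x)) has_real_derivative p1 s) (at s)" unfolding p1_def using 2
      by (auto intro!: derivative_eq_intros)
    then show ?thesis
      by (rule has_field_derivative_transform_within_open[where S="{0<..<\<tau>1}"])
        (use 2 t1_lt_t in \<open>auto simp: w_base p_def\<close>)
  next
    case 3
    define e where "e = min \<tau>1 (pi/2)"
    have e: "e > 0" "e \<le> \<tau>1" "e \<le> pi/2" using t1pos unfolding e_def by auto
    show ?thesis unfolding 3
    proof (rule deriv_glue[where gl="\<lambda>x. cos (\<omega> * x)" and gr="\<lambda>x. - \<omega> * sin (x - \<tau>1)" and e=e])
      show "((\<lambda>x. cos (\<omega> * x)) has_real_derivative p1 \<tau>1) (at \<tau>1)" unfolding p1_def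
        by (auto intro!: derivative_eq_intros)
      show "((\<lambda>x. - \<omega> * sin (x - \<tau>1)) has_real_derivative p1 \<tau>1) (at \<tau>1)" unfolding p1_def omt1
        by (auto intro!: derivative_eq_intros)
      show "e > 0" by fact
      fix y assume y: "\<tau>1 - e < y" "y \<le> \<tau>1"
      then show "w y = cos (\<omega> * y)" unfolding w_def using e tt
        by (subst ext_base) (auto simp: p_def)
    next
      fix y assume y: "\<tau>1 \<le> y" "y < \<tau>1 + e"
      then show "w y = - \<omega> * sin (y - \<tau>1)" unfolding w_def using e tt t1pos
        by (subst ext_base) (auto simp: p_def omt1)
    qed
  next
    case 4
    have "((\<lambda>x. - \<omega> * sin (x - \<tau>1)) has_real_derivative p1 s) (at s)" unfolding p1_def using 4
      by (auto intro!: derivative_eq_intros)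
    then show ?thesis
      by (rule has_field_derivative_transform_within_open[where S="{\<tau>1<..<\<tau>}"])
        (use 4 t1_lt_t t1pos in \<open>auto simp: w_base p_def\<close>)
  qed
qed

lemma w_deriv: "(w has_real_derivative w1 t) (at t)"
proof -
  have "(w has_real_derivative (-\<omega>) powi \<lfloor>t/\<tau>\<rfloor> * p1 (ph \<tau> t)) (at t)"
    unfolding w_def by (rule ext_deriv_transfer[OF tpos omnz]) (use w_loc ph_range[OF tpos] in \<open>simp add: w_def\<close>)
  then show ?thesis unfolding w1_def ext_def .
qed

lemma w1_loc_deriv: assumes "0 < s" "s < \<tau>" "s \<noteq> \<tau>1"
  shows "(w1 has_real_derivative (- (1 + q s) * p s)) (at s)"
proof (cases "s < \<tau>1")
  case True
  have oo: "\<omega> * \<omega> = 1 + C" using om2 by (simp add: power2_eq_square)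
  have "\<omega> * (\<omega> * cos (\<omega> * s)) = (\<omega> * \<omega>) * cos (\<omega> * s)" by (rule mult.assoc[symmetric])
  also have "\<dots> = (1 + C) * cos (\<omega> * s)" by (simp only: oo)
  finally have F: "\<omega> * (\<omega> * cos (\<omega> * s)) = (1 + C) * cos (\<omega> * s)" .
  have qp: "q s = C" "p s = cos (\<omega> * s)" using True by (auto simp: q_def p_def)
  have e: "- (1 + q s) * p s = - \<omega> * (\<omega> * cos (\<omega> * s))"
    by (simp only: qp mult_minus_left F)
  have "((\<lambda>x. - \<omega> * sin (\<omega> * x)) has_real_derivative (- (1 + q s) * p s)) (at s)"
    unfolding e by (auto intro!: derivative_eq_intros)
  then show ?thesis
    by (rule has_field_derivative_transform_within_open[where S="{0<..<\<tau>1}"])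
      (use True assms t1_lt_t in \<open>auto simp: w1_base p1_def\<close>)
next
  case False
  then have F: "\<tau>1 < s" using assms by auto
  have "((\<lambda>x. - \<omega> * cos (x - \<tau>1)) has_real_derivative (- (1 + q s) * p s)) (at s)"
    using F by (auto intro!: derivative_eq_intros simp: q_def p_def)
  then show ?thesis
    by (rule has_field_derivative_transform_within_open[where S="{\<tau>1<..<\<tau>}"])
      (use F assms t1_lt_t t1pos in \<open>auto simp: w1_base p1_def\<close>)
qed

lemma w1_loc: assumes "0 \<le> s" "s < \<tau>" shows "isCont w1 s"
proof -
  consider "s = 0" | "0 < s" "s < \<tau>1" | "s = \<tau>1" | "\<tau>1 < s" "s < \<tau>" using assms by linarith
  then show ?thesis
  proof cases
    case 1
    define e where "e = min \<tau>1 (pi/2)"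
    have e: "e > 0" "e \<le> \<tau>1" "e \<le> pi/2" using t1pos unfolding e_def by auto
    show ?thesis unfolding 1
    proof (rule cont_glue[where gl="\<lambda>x. - sin x" and gr="\<lambda>x. - \<omega> * sin (\<omega> * x)" and e=e])
      show "e > 0" by fact
      fix y assume y: "0 - e < y" "y \<le> 0"
      show "w1 y = - sin y"
      proof (cases "y = 0")
        case True then show ?thesis using w1_base[of 0] tpos t1pos
          by (simp add: p1_def)
      next
        case False
        then have "w1 y = inverse (-\<omega>) * p1 (y + \<tau>)" unfolding w1_def using y e tt t1pos
          by (intro ext_neg omnz) auto
        also have "p1 (y + \<tau>) = -\<omega> * cos (y + pi/2)" unfolding p1_def using y e tt by auto
        finally show ?thesis using om1 by (simp add: cos_add)
      qed
    next
      fix y assume y: "0 \<le> y" "y < 0 + e"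
      then show "w1 y = - \<omega> * sin (\<omega> * y)" using e t1_lt_t
        by (subst w1_base) (auto simp: p1_def)
    qed auto
  next
    case 2
    show ?thesis using w1_loc_deriv[of s] 2 t1_lt_t DERIV_isCont by auto
  next
    case 3
    define e where "e = min \<tau>1 (pi/2)"
    have e: "e > 0" "e \<le> \<tau>1" "e \<le> pi/2" using t1pos unfolding e_def by auto
    show ?thesis unfolding 3
    proof (rule cont_glue[where gl="\<lambda>x. - \<omega> * sin (\<omega> * x)" and gr="\<lambda>x. - \<omega> * cos (x - \<tau>1)" and e=e])
      show "e > 0" by fact
      show "- \<omega> * sin (\<omega> * \<tau>1) = - \<omega> * cos (\<tau>1 - \<tau>1)" by (simp add: omt1)
      fix y assume y: "\<tau>1 - e < y" "y \<le> \<tau>1"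
      then show "w1 y = - \<omega> * sin (\<omega> * y)" using e t1_lt_t
        by (subst w1_base) (auto simp: p1_def)
    next
      fix y assume y: "\<tau>1 \<le> y" "y < \<tau>1 + e"
      then show "w1 y = - \<omega> * cos (y - \<tau>1)" using e tt t1pos
        by (subst w1_base) (auto simp: p1_def omt1)
    qed (auto intro!: continuous_intros)
  next
    case 4
    show ?thesis using w1_loc_deriv[of s] 4 t1pos DERIV_isCont by auto
  qed
qed

lemma w1_cont: "isCont w1 t"
  unfolding w1_def by (rule ext_cont_transfer[OF tpos omnz]) (use w1_loc ph_range[OF tpos] in \<open>simp add: w1_def\<close>)

definition "J = {t. ph \<tau> t = 0 \<or> ph \<tau> t = \<tau>1}"

lemma w1_deriv: assumes "t \<notin> J" shows "(w1 has_real_derivative (- (1 + a t) * w t)) (at t)"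
proof -
  have s: "0 < ph \<tau> t" "ph \<tau> t < \<tau>" "ph \<tau> t \<noteq> \<tau>1" using assms ph_range[OF tpos, of t]
    unfolding J_def by auto
  have "(w1 has_real_derivative (-\<omega>) powi \<lfloor>t/\<tau>\<rfloor> * (- (1 + q (ph \<tau> t)) * p (ph \<tau> t))) (at t)"
    unfolding w1_def by (rule ext_deriv_transfer[OF tpos omnz]) (use w1_loc_deriv[OF s] in \<open>simp add: w1_def\<close>)
  then show ?thesis unfolding w_def ext_def a_def by (simp add: algebra_simps)
qed

end



context sw begin

definition "E t = exp (- c * t / 2)"
definition "u t = E t * w t"
definition "u1 t = E t * (w1 t - c/2 * w t)"
definition "u2 t = E t * (- (1 + a t) * w t - c * w1 t + c^2/4 * w t)"

lemma E_deriv: "(E has_real_derivative (-c/2) * E t) (at t)"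
  unfolding E_def by (auto intro!: derivative_eq_intros)

lemma u_deriv: "(u has_real_derivative u1 t) (at t)"
  unfolding u_def by (rule DERIV_cong[OF DERIV_mult[OF E_deriv w_deriv]]) (simp add: u1_def algebra_simps)

lemma u1_deriv: assumes "t \<notin> J" shows "(u1 has_real_derivative u2 t) (at t)"
proof -
  have "((\<lambda>t. w1 t - c/2 * w t) has_real_derivative (- (1 + a t) * w t) - c/2 * w1 t) (at t)"
    by (intro DERIV_diff DERIV_cmult w1_deriv[OF assms] w_deriv)
  then show ?thesis unfolding u1_def
    by (rule DERIV_cong[OF DERIV_mult[OF E_deriv]]) (simp add: u2_def algebra_simps power2_eq_square)
qed

lemma u1_cont: "isCont u1 t"
  unfolding u1_def E_def using w1_cont DERIV_isCont[OF w_deriv]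
  by (auto intro!: continuous_intros)

lemma eqn: "u2 t + c * u1 t + (1 + c^2/4 + a t) * u t = 0"
  unfolding u_def u1_def u2_def by (simp add: algebra_simps power2_eq_square)

lemma a_bnd: "0 \<le> a t" "a t \<le> C" using Cpos unfolding a_def q_def by auto

lemma p_bnd: "\<bar>p s\<bar> \<le> \<omega>" "\<bar>p1 s\<bar> \<le> \<omega>"
proof -
  have "\<bar>cos x\<bar> \<le> \<omega>" for x using abs_cos_le_one[of x] om1 by linarith
  moreover have "\<bar>\<omega> * sin x\<bar> \<le> \<omega>" for x using abs_sin_le_one[of x] om1 by (simp add: abs_mult)
  moreover have "\<bar>\<omega> * cos x\<bar> \<le> \<omega>" for x using abs_cos_le_one[of x] om1 by (simp add: abs_mult)
  ultimately show "\<bar>p s\<bar> \<le> \<omega>" "\<bar>p1 s\<bar> \<le> \<omega>" unfolding p_def p1_def by auto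
qed

lemma ext_bnd: assumes "\<And>s. \<bar>f s\<bar> \<le> \<omega>" "0 \<le> t" "t \<le> T"
  shows "\<bar>ext \<tau> (-\<omega>) f t\<bar> \<le> \<omega> ^ nat \<lfloor>T/\<tau>\<rfloor> * \<omega>"
proof -
  define k where "k = \<lfloor>t/\<tau>\<rfloor>"
  have k0: "k \<ge> 0" unfolding k_def using assms tpos by simp
  have kT: "k \<le> \<lfloor>T/\<tau>\<rfloor>" unfolding k_def using assms tpos by (intro floor_mono divide_right_mono) auto
  have "(-\<omega>) powi k = (-\<omega>) ^ nat k" using k0 by (metis int_nat_eq power_int_of_nat)
  then have "\<bar>(-\<omega>) powi k\<bar> = \<omega> ^ nat k" using om1 by (simp add: power_abs)
  also have "\<dots> \<le> \<omega> ^ nat \<lfloor>T/\<tau>\<rfloor>" using om1 kT by (intro power_increasing) auto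
  finally have "\<bar>(-\<omega>) powi k\<bar> \<le> \<omega> ^ nat \<lfloor>T/\<tau>\<rfloor>" .
  then show ?thesis unfolding ext_def k_def[symmetric] abs_mult
    by (intro mult_mono assms(1)) auto
qed

lemma J_finite: "finite (J \<inter> {0..T})"
proof -
  let ?K = "{0..\<lfloor>T/\<tau>\<rfloor>}"
  have "J \<inter> {0..T} \<subseteq> (\<lambda>k. of_int k * \<tau>) ` ?K \<union> (\<lambda>k. \<tau>1 + of_int k * \<tau>) ` ?K"
  proof
    fix x assume x: "x \<in> J \<inter> {0..T}"
    define k where "k = \<lfloor>x/\<tau>\<rfloor>"
    have k0: "k \<ge> 0" unfolding k_def using x tpos by simp
    have kT: "k \<le> \<lfloor>T/\<tau>\<rfloor>" unfolding k_def using x tpos by (intro floor_mono divide_right_mono) auto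
    have d: "x = ph \<tau> x + of_int k * \<tau>" unfolding k_def by (rule decomp[OF tpos])
    show "x \<in> (\<lambda>k. of_int k * \<tau>) ` ?K \<union> (\<lambda>k. \<tau>1 + of_int k * \<tau>) ` ?K"
      using x d k0 kT unfolding J_def by (auto intro!: image_eqI[where x=k])
  qed
  then show ?thesis by (rule finite_subset) auto
qed

lemma AE_J: "AE t in lebesgue_on {0..}. t \<notin> J"
proof -
  have "J \<subseteq> range (\<lambda>k::int. of_int k * \<tau>) \<union> range (\<lambda>k::int. \<tau>1 + of_int k * \<tau>)"
  proof
    fix x assume x: "x \<in> J"
    have d: "x = ph \<tau> x + of_int \<lfloor>x/\<tau>\<rfloor> * \<tau>" by (rule decomp[OF tpos])
    show "x \<in> range (\<lambda>k::int. of_int k * \<tau>) \<union> range (\<lambda>k::int. \<tau>1 + of_int k * \<tau>)"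
      using x d unfolding J_def by (auto intro!: image_eqI[where x="\<lfloor>x/\<tau>\<rfloor>"])
  qed
  then have "countable J" by (rule countable_subset) auto
  then have "J \<in> null_sets lborel" by (rule countable_imp_null_set_lborel)
  then have "AE t in lebesgue. t \<notin> J" by (intro AE_completion AE_not_in)
  then show ?thesis by (subst AE_restrict_space_iff) (auto elim: eventually_mono)
qed

lemma a_meas: "a \<in> borel_measurable (lebesgue_on {0..})"
proof -
  have "a \<in> borel_measurable borel" unfolding a_def q_def ph_def by measurable
  then have "a \<in> borel_measurable lborel" by simp
  then show ?thesis by (intro measurable_restrict_space1 measurable_completion)
qed

lemma lip: assumes "T \<ge> 0" shows "\<exists>L. \<forall>s\<in>{0..T}. \<forall>t\<in>{0..T}. \<bar>u1 s - u1 t\<bar> \<le> L * \<bar>s - t\<bar>"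
proof -
  define B where "B = \<omega> ^ nat \<lfloor>T/\<tau>\<rfloor> * \<omega>"
  define K where "K = (1 + C) * B + c * B + c^2/4 * B"
  have B0: "B \<ge> 0" unfolding B_def using om1 by simp
  have K0: "K \<ge> 0" unfolding K_def using B0 Cpos cpos by simp
  have u2b: "\<bar>u2 x\<bar> \<le> K" if x: "0 \<le> x" "x \<le> T" for x
  proof -
    have wb: "\<bar>w x\<bar> \<le> B" "\<bar>w1 x\<bar> \<le> B" unfolding w_def w1_def B_def using x p_bnd
      by (auto intro!: ext_bnd)
    have E: "0 < E x" "E x \<le> 1" unfolding E_def using x cpos by auto
    have tri: "\<bar>- A - B + D\<bar> \<le> \<bar>A\<bar> + \<bar>B\<bar> + \<bar>D\<bar>" for A B D :: real by linarith
    have "\<bar>- (1 + a x) * w x - c * w1 x + c^2/4 * w x\<bar> \<le> \<bar>(1 + a x) * w x\<bar> + \<bar>c * w1 x\<bar> + \<bar>c^2/4 * w x\<bar>"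
      unfolding mult_minus_left by (rule tri)
    also have "\<dots> = (1 + a x) * \<bar>w x\<bar> + c * \<bar>w1 x\<bar> + c^2/4 * \<bar>w x\<bar>"
      using a_bnd[of x] cpos by (simp add: abs_mult)
    also have "\<dots> \<le> (1 + C) * B + c * B + c^2/4 * B"
      using a_bnd[of x] cpos wb by (intro add_mono mult_mono) auto
    finally have X: "\<bar>- (1 + a x) * w x - c * w1 x + c^2/4 * w x\<bar> \<le> K" unfolding K_def .
    have "\<bar>u2 x\<bar> = E x * \<bar>- (1 + a x) * w x - c * w1 x + c^2/4 * w x\<bar>"
      unfolding u2_def abs_mult using E by simp
    also have "\<dots> \<le> E x * K" using X E by (intro mult_left_mono) auto
    also have "\<dots> \<le> K" using E K0 by (intro mult_left_le_one_le) auto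
    finally show ?thesis .
  qed
  have main: "\<bar>u1 t - u1 s\<bar> \<le> K * (t - s)" if st: "0 \<le> s" "s \<le> t" "t \<le> T" for s t
  proof -
    have "(u2 has_integral (u1 t - u1 s)) {s..t}"
    proof (rule fundamental_theorem_of_calculus_interior_strong[OF J_finite[of T] st(2)])
      fix x assume "x \<in> {s<..<t} - J \<inter> {0..T}"
      then have "x \<notin> J" using st by auto
      then show "(u1 has_vector_derivative u2 x) (at x)"
        using u1_deriv by (simp add: has_real_derivative_iff_has_vector_derivative)
    next
      show "continuous_on {s..t} u1" using u1_cont by (simp add: continuous_at_imp_continuous_on)
    qed
    then have I: "(u2 has_integral (u1 t - u1 s)) (cbox s t)" by simp
    have bnd: "\<And>x. x \<in> cbox s t \<Longrightarrow> norm (u2 x) \<le> K" using u2b st by auto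
    show ?thesis using has_integral_bound[OF K0 I bnd] st by (simp add: content_real)
  qed
  show ?thesis
  proof (intro exI ballI)
    fix s t assume "s \<in> {0..T}" "t \<in> {0..T}"
    then show "\<bar>u1 s - u1 t\<bar> \<le> K * \<bar>s - t\<bar>"
      using main[of s t] main[of t s] by (cases "s \<le> t") (auto simp: abs_minus_commute)
  qed
qed

lemma W2: "W2inf_loc u u1 u2"
  unfolding W2inf_loc_def
proof (intro conjI allI impI)
  show "(u has_real_derivative u1 t) (at t within {0..})" for t
    using u_deriv by (rule has_field_derivative_at_within)
  show "\<exists>L. \<forall>s\<in>{0..T}. \<forall>t\<in>{0..T}. \<bar>u1 s - u1 t\<bar> \<le> L * \<bar>s - t\<bar>" if "T \<ge> 0" for T
    using lip[OF that] .
  show "AE t in lebesgue_on {0..}. (u1 has_real_derivative u2 t) (at t within {0..})"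
    using AE_J by (rule eventually_mono) (auto intro: has_field_derivative_at_within u1_deriv)
qed

lemma unbnd: assumes "\<omega> * exp (- c * \<tau> / 2) > 1" shows "\<not> (\<exists>M. \<forall>t\<ge>0. \<bar>u t\<bar> \<le> M)"
proof
  assume "\<exists>M. \<forall>t\<ge>0. \<bar>u t\<bar> \<le> M"
  then obtain M where M: "\<And>t. t \<ge> 0 \<Longrightarrow> \<bar>u t\<bar> \<le> M" by blast
  obtain n where n: "M < (\<omega> * exp (- c * \<tau> / 2)) ^ n" using real_arch_pow[OF assms] by blast
  have "w (of_nat n * \<tau>) = (-\<omega>) ^ n"
  proof -
    have "w (0 + of_int (int n) * \<tau>) = (-\<omega>) powi (int n) * w 0"
      unfolding w_def by (rule ext_shift[OF tpos omnz])
    moreover have "w 0 = 1" using w_base[of 0] tpos t1pos by (simp add: p_def)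
    ultimately show ?thesis by simp
  qed
  then have "\<bar>u (of_nat n * \<tau>)\<bar> = exp (- c * (of_nat n * \<tau>) / 2) * \<omega> ^ n"
    unfolding u_def E_def using om1 by (simp add: abs_mult power_abs)
  also have "exp (- c * (of_nat n * \<tau>) / 2) = exp (- c * \<tau> / 2) ^ n"
    by (subst exp_of_nat_mult[symmetric]) (simp add: algebra_simps)
  finally have eq: "\<bar>u (of_nat n * \<tau>)\<bar> = (\<omega> * exp (- c * \<tau> / 2)) ^ n" by (simp add: power_mult_distrib mult.commute)
  have "of_nat n * \<tau> \<ge> 0" using tpos by simp
  from M[OF this] have "\<bar>u (of_nat n * \<tau>)\<bar> \<le> M" .
  with eq n show False by linarith
qed

end


lemma pi_sq_lt: "pi * pi < 10"
proof -
  have "pi * pi \<le> 3.15 * 3.15" using pi_approx(2) pi_gt_zero by (intro mult_mono) auto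
  then show ?thesis by simp
qed

theorem theorem2p2:
  fixes \<epsilon> :: real
  assumes "\<epsilon> > 0"
  shows "\<exists>b c C :: real. \<exists>a :: real \<Rightarrow> real.
           b > 1 \<and> 0 < c \<and> c < 2 * sqrt b \<and> C > 0 \<and> C < (pi + \<epsilon>) * c * sqrt b \<and>
           a \<in> borel_measurable (lebesgue_on {0..}) \<and>
           (AE t in lebesgue_on {0..}. 0 \<le> a t \<and> a t \<le> C) \<and>
           (\<exists>u u1 u2. W2inf_loc u u1 u2 \<and>
              (AE t in lebesgue_on {0..}. u2 t + c * u1 t + (b + a t) * u t = 0) \<and>
              \<not> (\<exists>M. \<forall>t\<ge>0. \<bar>u t\<bar> \<le> M))"
proof -
  define \<delta> where "\<delta> = min \<epsilon> 1 / 2"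
  define c where "c = \<delta> / 10"
  define C where "C = (pi + \<delta>) * c"
  define \<omega> where "\<omega> = sqrt (1 + C)"
  define \<tau>1 where "\<tau>1 = pi / (2 * \<omega>)"
  define \<tau> where "\<tau> = \<tau>1 + pi / 2"
  have d: "0 < \<delta>" "\<delta> < \<epsilon>" "\<delta> \<le> 1/2" using assms unfolding \<delta>_def by auto
  have c: "0 < c" "c \<le> 1/20" using d unfolding c_def by auto
  have Cp: "C > 0" unfolding C_def using c d pi_gt_zero by (intro mult_pos_pos) linarith+
  interpret sw c C \<omega> \<tau>1 \<tau> by unfold_locales (use c Cp in \<open>auto simp: \<omega>_def \<tau>1_def \<tau>_def\<close>)
  define b where "b = 1 + c^2/4"
  have b1: "b > 1" unfolding b_def using c by simp
  have sb: "sqrt b \<ge> 1" using b1 by simp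
  have cb: "c < 2 * sqrt b" using c sb by linarith
  have Cb: "C < (pi + \<epsilon>) * c * sqrt b"
  proof -
    have "C < (pi + \<epsilon>) * c" unfolding C_def using c d by (intro mult_strict_right_mono) auto
    also have "\<dots> \<le> (pi + \<epsilon>) * c * sqrt b"
    proof -
      have pos: "0 \<le> (pi + \<epsilon>) * c" using c assms pi_gt_zero by (intro mult_nonneg_nonneg) linarith+
      have "(pi + \<epsilon>) * c * 1 \<le> (pi + \<epsilon>) * c * sqrt b" by (rule mult_left_mono[OF sb pos])
      then show ?thesis by simp
    qed
    finally show ?thesis .
  qed
  have grow: "\<omega> * exp (- c * \<tau> / 2) > 1"
  proof -
    have z1: "0 \<le> c * pi" using c pi_gt_zero by simp
    have "c * pi \<le> (1/20) * 4" using c pi_gt_zero pi_approx(2) by (intro mult_mono) auto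
    then have z2: "c * pi \<le> 1" by simp
    note z = z1 z2
    have "exp (c * pi) \<le> 1 + c * pi + (c * pi)^2" using exp_bound[OF z] .
    also have "(c * pi)^2 = c * (c * (pi * pi))" by (simp add: power2_eq_square)
    also have "c * (pi * pi) < \<delta>" unfolding c_def using pi_sq_lt d by (simp add: field_simps)
    hence "c * (c * (pi * pi)) < c * \<delta>" using c by simp
    finally have "exp (c * pi) < 1 + C" unfolding C_def by (simp add: algebra_simps)
    moreover have "exp (c * pi) = exp (c * pi / 2) ^ 2" by (simp add: power2_eq_square exp_add[symmetric])
    ultimately have "sqrt (exp (c * pi / 2) ^ 2) < \<omega>" unfolding \<omega>_def by (simp only: real_sqrt_less_mono)
    hence lt: "exp (c * pi / 2) < \<omega>" by simp
    have "\<tau> < pi" using t1lt unfolding \<tau>_def by linarith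
    hence "exp (c * \<tau> / 2) \<le> exp (c * pi / 2)" using c by simp
    with lt have "exp (c * \<tau> / 2) < \<omega>" by linarith
    thus ?thesis by (simp add: exp_minus field_simps)
  qed
  show ?thesis
  proof (intro exI conjI)
    show "b > 1" "0 < c" "c < 2 * sqrt b" "C > 0" "C < (pi + \<epsilon>) * c * sqrt b" by fact+
    show "a \<in> borel_measurable (lebesgue_on {0..})" by (rule a_meas)
    show "AE t in lebesgue_on {0..}. 0 \<le> a t \<and> a t \<le> C" using a_bnd by simp
    show "W2inf_loc u u1 u2" by (rule W2)
    show "AE t in lebesgue_on {0..}. u2 t + c * u1 t + (b + a t) * u t = 0" using eqn unfolding b_def by simp
    show "\<not> (\<exists>M. \<forall>t\<ge>0. \<bar>u t\<bar> \<le> M)" by (rule unbnd[OF grow])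
  qed
qed

end
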